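(* Let $C \subset \mathbb{R}^n$ be convex, compact, with nonempty interior, and let $h \colon C \to \mathbb{R}$ be a Legendre function with domain $C$ that is continuous on $C$. Then: (i) Condition (A) holds if and only if $h$ is strictly convex on $C$; (ii) Condition (B) holds if and only if $C$ is a polytope. Here condition (A) is: for every sequence $(x_k)_{k\in\mathbb{N}} \subset \mathrm{int}\, C$ and every $y \in C$, if $D_h(y,x_k) \to 0$ as $k\to\infty$ then $x_k \to y$. Condition (B) is: for every sequence $(x_k)_{k\in\mathbb{N}} \subset \mathrm{int}\, C$ and every $y \in C$, if $x_k \to y$ as $k \to \infty$ then $D_h(y,x_k) \to 0$.
   Context: A convex function $h \colon C \to \mathbb{R}$ on a convex set $C\subset\mathbb{R}^n$ with nonempty interior is called Legendre if (1) it is essentially smooth: $h$ is continuously differentiable on $\mathrm{int}\, C$ and $\|\nabla h(x)\| \to +\infty$ whenever $x \in \mathrm{int}\, C$ approaches a point of the boundary of $C$; and (2) $h$ is strictly convex on $\mathrm{int}\, C$. The Bregman divergence of $h$ is defined for $y \in C$ and $x \in \mathrm{int}\, C$ by $D_h(y,x) = h(y) - h(x) - \langle \nabla h(x), y - x\rangle$. A polytope is the convex hull of finitely many points. *)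

theory Defs
  imports "HOL-Analysis.Analysis"
begin

definition strictly_convex_on :: "'a::real_vector set \<Rightarrow> ('a \<Rightarrow> real) \<Rightarrow> bool" where
  "strictly_convex_on S f \<longleftrightarrow> convex S \<and>
     (\<forall>x\<in>S. \<forall>y\<in>S. x \<noteq> y \<longrightarrow> (\<forall>t::real. 0 < t \<and> t < 1 \<longrightarrow>
        f ((1 - t) *\<^sub>R x + t *\<^sub>R y) < (1 - t) * f x + t * f y))"

text \<open>Gradient of h at x (meaningful where h is differentiable at x).\<close>
definition grad :: "('a::euclidean_space \<Rightarrow> real) \<Rightarrow> 'a \<Rightarrow> 'a" where
  "grad h x = (THE g. (h has_derivative (\<lambda>v. g \<bullet> v)) (at x))"

definition essentially_smooth :: "('a::euclidean_space \<Rightarrow> real) \<Rightarrow> 'a set \<Rightarrow> bool" where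
  "essentially_smooth h C \<longleftrightarrow>
     (\<forall>x\<in>interior C. h differentiable (at x)) \<and>
     continuous_on (interior C) (grad h) \<and>
     (\<forall>b\<in>frontier C. filterlim (\<lambda>x. norm (grad h x)) at_top (at b within interior C))"

definition legendre :: "('a::euclidean_space \<Rightarrow> real) \<Rightarrow> 'a set \<Rightarrow> bool" where
  "legendre h C \<longleftrightarrow> convex_on C h \<and> interior C \<noteq> {} \<and>
     essentially_smooth h C \<and> strictly_convex_on (interior C) h"

definition bregman :: "('a::euclidean_space \<Rightarrow> real) \<Rightarrow> 'a \<Rightarrow> 'a \<Rightarrow> real" where
  "bregman h y x = h y - h x - grad h x \<bullet> (y - x)"

definition condA :: "('a::euclidean_space \<Rightarrow> real) \<Rightarrow> 'a set \<Rightarrow> bool" where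
  "condA h C \<longleftrightarrow> (\<forall>xs y. (\<forall>k. xs k \<in> interior C) \<longrightarrow> y \<in> C \<longrightarrow>
      (\<lambda>k. bregman h y (xs k)) \<longlonglongrightarrow> 0 \<longrightarrow> xs \<longlonglongrightarrow> y)"

definition condB :: "('a::euclidean_space \<Rightarrow> real) \<Rightarrow> 'a set \<Rightarrow> bool" where
  "condB h C \<longleftrightarrow> (\<forall>xs y. (\<forall>k. xs k \<in> interior C) \<longrightarrow> y \<in> C \<longrightarrow>
      xs \<longlonglongrightarrow> y \<longrightarrow> (\<lambda>k. bregman h y (xs k)) \<longlonglongrightarrow> 0)"

end

theory Submission imports Defs begin

lemma linear_functional_inner:
  fixes D :: "'a::euclidean_space \<Rightarrow> real"
  assumes "linear D"
  shows "D = (\<lambda>v. (\<Sum>b\<in>Basis. D b *\<^sub>R b) \<bullet> v)"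
proof
  fix v :: 'a
  have "D v = D (\<Sum>b\<in>Basis. (v \<bullet> b) *\<^sub>R b)" by (simp add: euclidean_representation)
  also have "\<dots> = (\<Sum>b\<in>Basis. (v \<bullet> b) * D b)"
    using assms by (simp add: linear_sum linear_scale)
  also have "\<dots> = (\<Sum>b\<in>Basis. D b *\<^sub>R b) \<bullet> v"
    unfolding inner_sum_left by (simp add: inner_commute mult.commute)
  finally show "D v = (\<Sum>b\<in>Basis. D b *\<^sub>R b) \<bullet> v" .
qed

lemma grad_has_derivative:
  fixes h :: "'a::euclidean_space \<Rightarrow> real"
  assumes "h differentiable (at x)"
  shows "(h has_derivative (\<lambda>v. grad h x \<bullet> v)) (at x)"
proof -
  obtain D where D: "(h has_derivative D) (at x)" using assms differentiable_def by blast
  have lin: "linear D" using has_derivative_linear[OF D] .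
  define a where "a = (\<Sum>b\<in>Basis. D b *\<^sub>R b)"
  have Da: "D = (\<lambda>v. a \<bullet> v)" using linear_functional_inner[OF lin] a_def by simp
  have a: "(h has_derivative (\<lambda>v. a \<bullet> v)) (at x)" using D Da by simp
  have uniq: "g = a" if "(h has_derivative (\<lambda>v. g \<bullet> v)) (at x)" for g
  proof -
    have "(\<lambda>v. g \<bullet> v) = (\<lambda>v. a \<bullet> v)" using has_derivative_unique[OF that a] .
    then have "g \<bullet> (g - a) = a \<bullet> (g - a)" by metis
    then have "(g - a) \<bullet> (g - a) = 0" by (simp add: inner_diff_left)
    then show ?thesis by simp
  qed
  have "grad h x = a" unfolding grad_def
    using a uniq by (rule the_equality)
  then show ?thesis using a by simp
qed

lemma subgrad_ineq:
  fixes h :: "'a::real_inner \<Rightarrow> real"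
  assumes cvx: "convex_on C h" and xC: "x \<in> C" and cC: "c \<in> C"
    and der: "(h has_derivative (\<lambda>v. g \<bullet> v)) (at x)"
  shows "h x + g \<bullet> (c - x) \<le> h c"
proof -
  define \<phi> where "\<phi> = (\<lambda>t::real. h (x + t *\<^sub>R (c - x)))"
  have d1: "((\<lambda>t::real. x + t *\<^sub>R (c - x)) has_derivative (\<lambda>t. t *\<^sub>R (c - x))) (at 0)"
    by (auto intro!: derivative_eq_intros)
  have der0: "(h has_derivative (\<lambda>v. g \<bullet> v)) (at (x + 0 *\<^sub>R (c - x)))" using der by simp
  have "(\<phi> has_derivative (\<lambda>t. g \<bullet> (t *\<^sub>R (c - x)))) (at 0)"
    unfolding \<phi>_def using has_derivative_compose[OF d1 der0] by (simp add: o_def)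
  then have "(\<phi> has_field_derivative (g \<bullet> (c - x))) (at 0)"
    unfolding has_field_derivative_def
    by (rule has_derivative_eq_rhs) (auto simp: fun_eq_iff)
  then have lim: "((\<lambda>t. (\<phi> (0 + t) - \<phi> 0) / t) \<longlongrightarrow> g \<bullet> (c - x)) (at 0)"
    using DERIV_def by blast
  then have lim': "((\<lambda>t. (\<phi> (0 + t) - \<phi> 0) / t) \<longlongrightarrow> g \<bullet> (c - x)) (at_right 0)"
    by (rule filterlim_mono) (auto simp: at_le)
  have ev: "\<forall>\<^sub>F t in at_right (0::real). (\<phi> (0 + t) - \<phi> 0) / t \<le> h c - h x"
  proof -
    have "\<forall>\<^sub>F t in at_right (0::real). 0 < t \<and> t < 1"
      by (rule eventually_at_rightI[of 0 1]) auto
    then show ?thesis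
    proof (rule eventually_mono)
      fix t :: real assume t: "0 < t \<and> t < 1"
      have "h ((1 - t) *\<^sub>R x + t *\<^sub>R c) \<le> (1 - t) * h x + t * h c"
        using convex_onD[OF cvx _ _ xC cC] t by simp
      moreover have "(1 - t) *\<^sub>R x + t *\<^sub>R c = x + t *\<^sub>R (c - x)" by (simp add: algebra_simps)
      ultimately have "\<phi> t - \<phi> 0 \<le> t * (h c - h x)" unfolding \<phi>_def by (simp add: algebra_simps)
      then show "(\<phi> (0 + t) - \<phi> 0) / t \<le> h c - h x" using t by (simp add: divide_le_eq mult.commute)
    qed
  qed
  have "g \<bullet> (c - x) \<le> h c - h x"
    using tendsto_upperbound[OF lim' ev] by simp
  then show ?thesis by simp
qed

context
  fixes C :: "'a::euclidean_space set" and h :: "'a \<Rightarrow> real"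
  assumes cvx: "convex C" and cpt: "compact C" and int_ne: "interior C \<noteq> {}"
    and leg: "legendre h C" and cont: "continuous_on C h"
begin

lemma hder: "x \<in> interior C \<Longrightarrow> (h has_derivative (\<lambda>v. grad h x \<bullet> v)) (at x)"
  using leg grad_has_derivative unfolding legendre_def essentially_smooth_def by blast

lemma hconv: "convex_on C h" using leg legendre_def by blast

lemma sub: "x \<in> interior C \<Longrightarrow> c \<in> C \<Longrightarrow> h x + grad h x \<bullet> (c - x) \<le> h c"
  using subgrad_ineq[OF hconv _ _ hder] interior_subset by blast

lemma breg_nonneg: "x \<in> interior C \<Longrightarrow> y \<in> C \<Longrightarrow> 0 \<le> bregman h y x"
  using sub[of x y] unfolding bregman_def by simp

lemma breg_upper:
  assumes "x \<in> interior C" "y \<in> C" "2 *\<^sub>R x - y \<in> C"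
  shows "bregman h y x \<le> h y - 2 * h x + h (2 *\<^sub>R x - y)"
proof -
  have e: "(2 *\<^sub>R x - y) - x = x - y" by (simp add: algebra_simps scaleR_2)
  have "h x + grad h x \<bullet> (x - y) \<le> h (2 *\<^sub>R x - y)"
    using sub[OF assms(1) assms(3)] unfolding e .
  moreover have "grad h x \<bullet> (y - x) = - (grad h x \<bullet> (x - y))" by (simp add: inner_diff_right)
  ultimately show ?thesis unfolding bregman_def by linarith
qed

lemma hbound: "\<exists>B\<ge>0. \<forall>c\<in>C. \<bar>h c\<bar> \<le> B"
proof -
  have "compact (h ` C)" using compact_continuous_image[OF cont cpt] .
  then obtain a where "\<forall>z\<in>h ` C. norm z \<le> a" using compact_imp_bounded bounded_iff by blast
  then show ?thesis by (intro exI[of _ "max a 0"]) auto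
qed

lemma h_tendsto:
  assumes "(xs \<longlongrightarrow> y) F" "y \<in> C" "eventually (\<lambda>k. xs k \<in> C) F"
  shows "((\<lambda>k. h (xs k)) \<longlongrightarrow> h y) F"
  using continuous_on_tendsto_compose[OF cont assms] .

lemma A_of_strict:
  assumes sc: "strictly_convex_on C h"
  shows "condA h C"
  unfolding condA_def
proof (intro allI impI)
  fix xs y
  assume xs: "\<forall>k. xs k \<in> interior C" and yC: "y \<in> C"
    and D: "(\<lambda>k. bregman h y (xs k)) \<longlonglongrightarrow> 0"
  show "xs \<longlonglongrightarrow> y"
  proof (rule tendstoI)
    fix e :: real assume e: "0 < e"
    define K where "K = C \<inter> {x. e \<le> dist x y}"
    define F where "F = (\<lambda>x. h y + h x - 2 * h ((1/2) *\<^sub>R x + (1/2) *\<^sub>R y))"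
    have xsC: "xs k \<in> C" for k using xs interior_subset by blast
    show "\<forall>\<^sub>F k in sequentially. dist (xs k) y < e"
    proof (cases "K = {}")
      case True
      have "dist (xs k) y < e" for k using True xsC[of k] unfolding K_def
        by (metis (mono_tags) IntI mem_Collect_eq not_le empty_iff)
      then show ?thesis by (intro always_eventually) blast
    next
      case False
      have "closed {x. e \<le> dist x y}" by (intro closed_Collect_le continuous_intros)
      then have cK: "compact K" unfolding K_def using cpt by (simp add: compact_Int_closed)
      have midC: "(1/2) *\<^sub>R x + (1/2) *\<^sub>R y \<in> C" if "x \<in> C" for x
        using convexD[OF cvx that yC, of "1/2" "1/2"] by simp
      have "continuous_on K (\<lambda>x. h ((1/2) *\<^sub>R x + (1/2) *\<^sub>R y))"
        by (rule continuous_on_compose2[OF cont]) (auto simp: K_def midC intro!: continuous_intros)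
      moreover have "continuous_on K h" using cont by (rule continuous_on_subset) (auto simp: K_def)
      ultimately have "continuous_on K F" unfolding F_def by (intro continuous_intros)
      then obtain x0 where x0: "x0 \<in> K" and x0min: "\<forall>x\<in>K. F x0 \<le> F x"
        using continuous_attains_inf[OF cK False] by blast
      have "x0 \<noteq> y" using x0 e by (auto simp: K_def)
      moreover have "x0 \<in> C" using x0 by (simp add: K_def)
      ultimately have "\<forall>t. 0 < t \<and> t < 1 \<longrightarrow> h ((1 - t) *\<^sub>R x0 + t *\<^sub>R y) < (1 - t) * h x0 + t * h y"
        using sc yC unfolding strictly_convex_on_def by blast
      then have "h ((1 - 1/2) *\<^sub>R x0 + (1/2) *\<^sub>R y) < (1 - 1/2) * h x0 + (1/2) * h y"
        by (metis (no_types, lifting) field_sum_of_halves less_add_same_cancel2 zero_less_divide_1_iff zero_less_numeral)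
      then have Fpos: "0 < F x0" unfolding F_def by simp
      have Fle: "F x \<le> bregman h y x" if "x \<in> interior C" for x
      proof -
        have "h x + grad h x \<bullet> (((1/2) *\<^sub>R x + (1/2) *\<^sub>R y) - x) \<le> h ((1/2) *\<^sub>R x + (1/2) *\<^sub>R y)"
          using sub[OF that midC] that interior_subset by blast
        moreover have "((1/2) *\<^sub>R x + (1/2) *\<^sub>R y) - x = (1/2) *\<^sub>R (y - x)"
          by (simp add: algebra_simps) (metis scaleR_add_left field_sum_of_halves scaleR_one)
        ultimately show ?thesis unfolding F_def bregman_def by simp
      qed
      have "\<forall>\<^sub>F k in sequentially. bregman h y (xs k) < F x0"
        using order_tendstoD(2)[OF D Fpos] .
      then show ?thesis
      proof (rule eventually_mono)
        fix k assume k: "bregman h y (xs k) < F x0"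
        show "dist (xs k) y < e"
        proof (rule ccontr)
          assume "\<not> dist (xs k) y < e"
          then have "xs k \<in> K" using xsC by (auto simp: K_def)
          then have "F x0 \<le> F (xs k)" using x0min by blast
          also have "\<dots> \<le> bregman h y (xs k)" using Fle xs by blast
          finally show False using k by simp
        qed
      qed
    qed
  qed
qed

lemma strict_of_A:
  assumes A: "condA h C"
  shows "strictly_convex_on C h"
  unfolding strictly_convex_on_def
proof (intro conjI cvx ballI impI allI)
  fix u v t
  assume uC: "u \<in> C" and vC: "v \<in> C" and uv: "u \<noteq> v" and t: "0 < (t::real) \<and> t < 1"
  define w where "w = (1 - t) *\<^sub>R u + t *\<^sub>R v"
  show "h ((1 - t) *\<^sub>R u + t *\<^sub>R v) < (1 - t) * h u + t * h v"
  proof (rule ccontr)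
    assume "\<not> ?thesis"
    then have ge: "(1 - t) * h u + t * h v \<le> h w" unfolding w_def by simp
    have wC: "w \<in> C" unfolding w_def using convexD[OF cvx uC vC, of "1 - t" t] t by simp
    obtain c where c: "c \<in> interior C" using int_ne by blast
    have cC: "c \<in> C" using c interior_subset by blast
    define s where "s = (\<lambda>k::nat. 1 / (real k + 2))"
    define xs where "xs = (\<lambda>k. w + s k *\<^sub>R (c - w))"
    have s_pos: "0 < s k" for k unfolding s_def by simp
    have s_le: "2 * s k \<le> 1" for k unfolding s_def by (simp add: field_simps)
    have xs_int: "xs k \<in> interior C" for k
    proof -
      have "w - s k *\<^sub>R (w - c) \<in> interior C"
        using mem_interior_convex_shrink[OF cvx c wC, of "s k"] s_pos[of k] s_le[of k] by simp
      moreover have "w - s k *\<^sub>R (w - c) = xs k" unfolding xs_def by (simp add: algebra_simps)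
      ultimately show ?thesis by simp
    qed
    have xs2: "2 *\<^sub>R xs k - w \<in> C" for k
    proof -
      have "(1 - 2 * s k) *\<^sub>R w + (2 * s k) *\<^sub>R c \<in> C"
        using convexD[OF cvx wC cC, of "1 - 2 * s k" "2 * s k"] s_pos[of k] s_le[of k] by simp
      moreover have "(1 - 2 * s k) *\<^sub>R w + (2 * s k) *\<^sub>R c = 2 *\<^sub>R xs k - w"
        unfolding xs_def by (simp add: algebra_simps scaleR_2)
      ultimately show ?thesis by simp
    qed
    have s_lim: "s \<longlonglongrightarrow> 0"
    proof -
      have "(\<lambda>n. 1 / real (n + 2)) \<longlonglongrightarrow> 0"
        using LIMSEQ_ignore_initial_segment[OF lim_inverse_n', of 2] by simp
      then show ?thesis unfolding s_def by (simp add: add.commute)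
    qed
    have xs_lim: "xs \<longlonglongrightarrow> w"
    proof -
      have "(\<lambda>k. w + s k *\<^sub>R (c - w)) \<longlonglongrightarrow> w + 0 *\<^sub>R (c - w)"
        by (intro tendsto_intros s_lim)
      then show ?thesis unfolding xs_def by simp
    qed
    have xs2_lim: "(\<lambda>k. 2 *\<^sub>R xs k - w) \<longlonglongrightarrow> w"
    proof -
      have "(\<lambda>k. 2 *\<^sub>R xs k - w) \<longlonglongrightarrow> 2 *\<^sub>R w - w"
        by (intro tendsto_intros xs_lim)
      then show ?thesis by (simp add: scaleR_2)
    qed
    have xsC: "xs k \<in> C" for k using xs_int interior_subset by blast
    have h1: "(\<lambda>k. h (xs k)) \<longlonglongrightarrow> h w"
      using h_tendsto[OF xs_lim wC] xsC by simp
    have h2: "(\<lambda>k. h (2 *\<^sub>R xs k - w)) \<longlonglongrightarrow> h w"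
      using h_tendsto[OF xs2_lim wC] xs2 by simp
    have up: "(\<lambda>k. h w - 2 * h (xs k) + h (2 *\<^sub>R xs k - w)) \<longlonglongrightarrow> h w - 2 * h w + h w"
      by (intro tendsto_intros h1 h2)
    have Dw: "(\<lambda>k. bregman h w (xs k)) \<longlonglongrightarrow> 0"
    proof (rule real_tendsto_sandwich[where f="\<lambda>_. 0" and h="\<lambda>k. h w - 2 * h (xs k) + h (2 *\<^sub>R xs k - w)"])
      show "\<forall>\<^sub>F k in sequentially. 0 \<le> bregman h w (xs k)"
        using breg_nonneg[OF xs_int wC] by simp
      show "\<forall>\<^sub>F k in sequentially. bregman h w (xs k) \<le> h w - 2 * h (xs k) + h (2 *\<^sub>R xs k - w)"
        using breg_upper[OF xs_int wC xs2] by simp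
      show "(\<lambda>_. 0) \<longlonglongrightarrow> (0::real)" by simp
      show "(\<lambda>k. h w - 2 * h (xs k) + h (2 *\<^sub>R xs k - w)) \<longlonglongrightarrow> 0" using up by simp
    qed
    have ident: "(1 - t) * bregman h u x + t * bregman h v x = bregman h w x + ((1 - t) * h u + t * h v - h w)" for x
    proof -
      have "w - x = (1 - t) *\<^sub>R (u - x) + t *\<^sub>R (v - x)" unfolding w_def by (simp add: algebra_simps)
      then have "grad h x \<bullet> (w - x) = (1 - t) * (grad h x \<bullet> (u - x)) + t * (grad h x \<bullet> (v - x))"
        by (simp add: inner_add_right)
      then show ?thesis unfolding bregman_def by (simp add: algebra_simps)
    qed
    have Du_le: "bregman h u (xs k) \<le> bregman h w (xs k) / (1 - t)" for k
    proof -
      have "0 \<le> bregman h v (xs k)" using breg_nonneg[OF xs_int vC] .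
      then have "(1 - t) * bregman h u (xs k) \<le> bregman h w (xs k)"
        using ident[of "xs k"] ge t by (smt (verit) mult_nonneg_nonneg)
      then show ?thesis using t by (simp add: field_simps)
    qed
    have Du: "(\<lambda>k. bregman h u (xs k)) \<longlonglongrightarrow> 0"
    proof (rule real_tendsto_sandwich[where f="\<lambda>_. 0" and h="\<lambda>k. bregman h w (xs k) / (1 - t)"])
      show "\<forall>\<^sub>F k in sequentially. 0 \<le> bregman h u (xs k)"
        using breg_nonneg[OF xs_int uC] by simp
      show "\<forall>\<^sub>F k in sequentially. bregman h u (xs k) \<le> bregman h w (xs k) / (1 - t)"
        using Du_le by simp
      show "(\<lambda>_. 0) \<longlonglongrightarrow> (0::real)" by simp
      show "(\<lambda>k. bregman h w (xs k) / (1 - t)) \<longlonglongrightarrow> 0"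
        using tendsto_divide_zero[OF Dw] by simp
    qed
    have "xs \<longlonglongrightarrow> u" using A xs_int uC Du unfolding condA_def by blast
    then have "u = w" using xs_lim LIMSEQ_unique by blast
    then have "t *\<^sub>R (v - u) = 0" unfolding w_def by (auto simp: algebra_simps)
    then show False using t uv by simp
  qed
qed


lemma polytope_cone:
  assumes P: "polytope C" and yC: "y \<in> C"
  shows "eventually (\<lambda>x. x \<in> C \<longrightarrow> 2 *\<^sub>R x - y \<in> C) (nhds y)"
proof -
  obtain F where F: "finite F" "C = \<Inter>F" "\<forall>H\<in>F. \<exists>a b. a \<noteq> 0 \<and> H = {x. a \<bullet> x \<le> b}"
    using polytope_imp_polyhedron[OF P] unfolding polyhedron_def by blast
  have "\<forall>H\<in>F. eventually (\<lambda>x. x \<in> H \<longrightarrow> 2 *\<^sub>R x - y \<in> H) (nhds y)"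
  proof
    fix H assume H: "H \<in> F"
    then obtain a b where Hab: "H = {x. a \<bullet> x \<le> b}" using F(3) by blast
    have yH: "a \<bullet> y \<le> b" using yC F(2) H Hab by auto
    show "eventually (\<lambda>x. x \<in> H \<longrightarrow> 2 *\<^sub>R x - y \<in> H) (nhds y)"
    proof (cases "a \<bullet> y = b")
      case True
      have "x \<in> H \<longrightarrow> 2 *\<^sub>R x - y \<in> H" for x
      proof
        assume "x \<in> H"
        then have "a \<bullet> x \<le> b" by (simp add: Hab)
        moreover have "a \<bullet> (2 *\<^sub>R x - y) = 2 * (a \<bullet> x) - a \<bullet> y" by (simp add: inner_diff_right)
        ultimately show "2 *\<^sub>R x - y \<in> H" using True by (simp add: Hab)
      qed
      then show ?thesis by (intro always_eventually) blast
    next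
      case False
      then have lt: "a \<bullet> y < b" using yH by simp
      define S where "S = {x. a \<bullet> (2 *\<^sub>R x - y) < b}"
      have "open S" unfolding S_def by (intro open_Collect_less continuous_intros)
      moreover have "2 *\<^sub>R y - y = y" by (simp add: scaleR_2)
      then have "y \<in> S" using lt by (simp add: S_def)
      moreover have "\<forall>x\<in>S. x \<in> H \<longrightarrow> 2 *\<^sub>R x - y \<in> H" unfolding S_def Hab by simp
      ultimately show ?thesis unfolding eventually_nhds by blast
    qed
  qed
  then have "eventually (\<lambda>x. \<forall>H\<in>F. x \<in> H \<longrightarrow> 2 *\<^sub>R x - y \<in> H) (nhds y)"
    by (rule eventually_ball_finite[OF F(1)])
  then show ?thesis by (rule eventually_mono) (auto simp: F(2))
qed

lemma B_of_polytope:
  assumes P: "polytope C"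
  shows "condB h C"
  unfolding condB_def
proof (intro allI impI)
  fix xs y
  assume xs_int: "\<forall>k. xs k \<in> interior C" and yC: "y \<in> C" and xs_lim: "xs \<longlonglongrightarrow> y"
  have xsC: "xs k \<in> C" for k using xs_int interior_subset by blast
  have "\<forall>\<^sub>F k in sequentially. xs k \<in> C \<longrightarrow> 2 *\<^sub>R xs k - y \<in> C"
    using eventually_compose_filterlim[OF polytope_cone[OF P yC] xs_lim] .
  then have ev: "\<forall>\<^sub>F k in sequentially. 2 *\<^sub>R xs k - y \<in> C"
    by (rule eventually_mono) (simp add: xsC)
  have xs2_lim: "(\<lambda>k. 2 *\<^sub>R xs k - y) \<longlonglongrightarrow> y"
  proof -
    have "(\<lambda>k. 2 *\<^sub>R xs k - y) \<longlonglongrightarrow> 2 *\<^sub>R y - y"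
      by (intro tendsto_intros xs_lim)
    then show ?thesis by (simp add: scaleR_2)
  qed
  have h1: "(\<lambda>k. h (xs k)) \<longlonglongrightarrow> h y"
    using h_tendsto[OF xs_lim yC] xsC by simp
  have h2: "(\<lambda>k. h (2 *\<^sub>R xs k - y)) \<longlonglongrightarrow> h y"
    using h_tendsto[OF xs2_lim yC ev] .
  have up: "(\<lambda>k. h y - 2 * h (xs k) + h (2 *\<^sub>R xs k - y)) \<longlonglongrightarrow> h y - 2 * h y + h y"
    by (intro tendsto_intros h1 h2)
  show "(\<lambda>k. bregman h y (xs k)) \<longlonglongrightarrow> 0"
  proof (rule real_tendsto_sandwich[where f="\<lambda>_. 0" and h="\<lambda>k. h y - 2 * h (xs k) + h (2 *\<^sub>R xs k - y)"])
    show "\<forall>\<^sub>F k in sequentially. 0 \<le> bregman h y (xs k)"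
      using breg_nonneg[OF xs_int[rule_format] yC] by simp
    show "\<forall>\<^sub>F k in sequentially. bregman h y (xs k) \<le> h y - 2 * h (xs k) + h (2 *\<^sub>R xs k - y)"
      using ev by (rule eventually_mono) (rule breg_upper[OF xs_int[rule_format] yC])
    show "(\<lambda>_. 0) \<longlonglongrightarrow> (0::real)" by simp
    show "(\<lambda>k. h y - 2 * h (xs k) + h (2 *\<^sub>R xs k - y)) \<longlonglongrightarrow> 0" using up by simp
  qed
qed


lemma B_delta:
  assumes B: "condB h C" and yC: "y \<in> C"
  shows "\<exists>\<delta>>0. \<forall>x\<in>interior C. dist x y < \<delta> \<longrightarrow> bregman h y x < 1"
proof (rule ccontr)
  assume "\<not> ?thesis"
  then have H: "\<forall>\<delta>>0. \<exists>x\<in>interior C. dist x y < \<delta> \<and> 1 \<le> bregman h y x"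
    by (auto simp: not_less) (metis not_le)
  have "\<exists>x. x \<in> interior C \<and> dist x y < 1 / (real n + 1) \<and> 1 \<le> bregman h y x" for n :: nat
    using H[rule_format, of "1 / (real n + 1)"] by auto
  then obtain xs where xs: "\<And>n. xs n \<in> interior C \<and> dist (xs n) y < 1 / (real n + 1) \<and> 1 \<le> bregman h y (xs n)"
    by metis
  have inv: "(\<lambda>n. 1 / (real n + 1)) \<longlonglongrightarrow> 0"
    using LIMSEQ_ignore_initial_segment[OF lim_inverse_n', of 1] by (simp add: add.commute)
  have "(\<lambda>n. dist (xs n) y) \<longlonglongrightarrow> 0"
  proof (rule real_tendsto_sandwich[where f="\<lambda>_. 0" and h="\<lambda>n. 1 / (real n + 1)"])
    show "\<forall>\<^sub>F n in sequentially. 0 \<le> dist (xs n) y" by simp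
    show "\<forall>\<^sub>F n in sequentially. dist (xs n) y \<le> 1 / (real n + 1)" using xs by (simp add: less_imp_le)
  qed (auto simp: inv)
  then have "xs \<longlonglongrightarrow> y" using tendsto_dist_iff by blast
  then have D: "(\<lambda>n. bregman h y (xs n)) \<longlonglongrightarrow> 0" using B xs yC unfolding condB_def by blast
  have "1 \<le> (0::real)"
    by (rule tendsto_lowerbound[OF D]) (use xs in auto)
  then show False by simp
qed

lemma B_cone_int:
  assumes B: "condB h C" and yC: "y \<in> C"
  shows "\<exists>\<rho>>0. \<forall>z\<in>interior C. dist z y < \<rho> \<longrightarrow> 2 *\<^sub>R z - y \<in> C"
proof -
  obtain \<delta> where \<delta>: "\<delta> > 0" and D\<delta>: "\<forall>x\<in>interior C. dist x y < \<delta> \<longrightarrow> bregman h y x < 1"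
    using B_delta[OF B yC] by blast
  obtain Bd where Bd0: "Bd \<ge> 0" and Bd: "\<forall>c\<in>C. \<bar>h c\<bar> \<le> Bd" using hbound by blast
  have es: "\<forall>b\<in>frontier C. filterlim (\<lambda>x. norm (grad h x)) at_top (at b within interior C)"
    using leg unfolding legendre_def essentially_smooth_def by blast
  have "\<forall>z\<in>interior C. dist z y < \<delta> / 4 \<longrightarrow> 2 *\<^sub>R z - y \<in> C"
  proof (intro ballI impI)
    fix z assume zi: "z \<in> interior C" and zy: "dist z y < \<delta> / 4"
    have zC: "z \<in> C" using zi interior_subset by blast
    show "2 *\<^sub>R z - y \<in> C"
    proof (rule ccontr)
      define p where "p = 2 *\<^sub>R z - y"
      assume "2 *\<^sub>R z - y \<notin> C"
      then have pC: "p \<notin> C" by (simp add: p_def)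
      obtain \<epsilon>0 where \<epsilon>0: "\<epsilon>0 > 0" "ball z \<epsilon>0 \<subseteq> C" using zi mem_interior by blast
      define \<epsilon> where "\<epsilon> = min \<epsilon>0 \<delta>"
      have \<epsilon>: "\<epsilon> > 0" "\<epsilon> \<le> \<delta>" "ball z \<epsilon> \<subseteq> C"
        using \<epsilon>0 \<delta> unfolding \<epsilon>_def by auto
      have "closed_segment z p \<inter> frontier C \<noteq> {}"
        by (rule connected_Int_frontier[OF connected_segment]) (use zC pC in auto)
      then obtain q where qseg: "q \<in> closed_segment z p" and qF: "q \<in> frontier C" by blast
      obtain l where l: "0 \<le> l" "l \<le> 1" and ql: "q = (1 - l) *\<^sub>R z + l *\<^sub>R p"
        using qseg unfolding in_segment(1) by blast
      have qy: "q - y = (1 + l) *\<^sub>R (z - y)"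
        unfolding ql p_def by (simp add: algebra_simps scaleR_2)
      have dqy: "dist q y \<le> 2 * dist z y"
      proof -
        have "dist q y = (1 + l) * dist z y" using qy l by (simp add: dist_norm)
        also have "\<dots> \<le> 2 * dist z y" using l by (intro mult_right_mono) auto
        finally show ?thesis .
      qed
      define G0 where "G0 = (4 + 16 * Bd) / \<epsilon> + 1"
      have G0pos: "G0 > 0" unfolding G0_def using \<epsilon> Bd0 by (simp add: add_pos_nonneg)
      have eG0: "\<epsilon> * G0 = 4 + 16 * Bd + \<epsilon>" unfolding G0_def using \<epsilon> by (simp add: field_simps)
      have "eventually (\<lambda>x. G0 \<le> norm (grad h x)) (at q within interior C)"
        using es qF unfolding filterlim_at_top by blast
      then obtain d where d: "d > 0" and dG: "\<forall>x\<in>interior C. x \<noteq> q \<and> dist x q < d \<longrightarrow> G0 \<le> norm (grad h x)"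
        unfolding eventually_at by blast
      have "q \<in> closure (interior C)" using qF convex_closure_interior[OF cvx int_ne]
        by (simp add: frontier_def)
      moreover have "q \<notin> interior C" using qF by (simp add: frontier_def)
      ultimately have "q islimpt interior C" by (simp add: closure_def)
      then obtain x where xi: "x \<in> interior C" and xq: "x \<noteq> q" and dxq: "dist x q < min d (\<epsilon> / 4)"
        unfolding islimpt_approachable using d \<epsilon> by (metis min_less_iff_conj zero_less_divide_iff zero_less_numeral)
      have xC: "x \<in> C" using xi interior_subset by blast
      define g where "g = grad h x"
      define G where "G = norm g"
      have GG0: "G0 \<le> G" using dG xi xq dxq unfolding G_def g_def by auto
      have Gpos: "G > 0" using GG0 G0pos by simp
      have dxy: "dist x y < \<delta>"
      proof -
        have "dist x y \<le> dist x q + dist q y" by (rule dist_triangle)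
        also have "\<dots> < \<epsilon> / 4 + 2 * (\<delta> / 4)" using dxq dqy zy by auto
        also have "\<dots> \<le> \<delta>" using \<epsilon> by simp
        finally show ?thesis .
      qed
      have a: "h y - h x - g \<bullet> (y - x) < 1"
        using D\<delta> xi dxy unfolding bregman_def g_def by blast
      define c1 where "c1 = z + (\<epsilon> / (2 * G)) *\<^sub>R g"
      have "dist z c1 = \<epsilon> / 2" unfolding c1_def dist_norm G_def using Gpos G_def
        by (simp add: abs_of_pos \<epsilon>)
      then have c1C: "c1 \<in> C" using \<epsilon> by (intro subsetD[OF \<epsilon>(3)]) auto
      have b: "h x + g \<bullet> (c1 - x) \<le> h c1" using sub[OF xi c1C] unfolding g_def .
      have gg: "g \<bullet> g = G * G" unfolding G_def by (metis power2_eq_square power2_norm_eq_inner)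
      have "g \<bullet> (c1 - x) = g \<bullet> (z - x) + (\<epsilon> / (2 * G)) * (G * G)"
        unfolding c1_def by (simp add: inner_diff_right inner_add_right gg algebra_simps)
      also have "(\<epsilon> / (2 * G)) * (G * G) = \<epsilon> * G / 2" using Gpos by (simp add: field_simps)
      finally have b': "h x + g \<bullet> (z - x) + \<epsilon> * G / 2 \<le> h c1" using b by simp
      have c: "h x + g \<bullet> (y - x) \<le> h y" using sub[OF xi yC] unfolding g_def .
      have "\<bar>g \<bullet> (x - q)\<bar> \<le> G * norm (x - q)" unfolding G_def by (rule Cauchy_Schwarz_ineq2)
      also have "\<dots> \<le> G * (\<epsilon> / 4)" using dxq Gpos by (intro mult_left_mono) (auto simp: dist_norm)
      finally have dd: "g \<bullet> (x - q) \<le> \<epsilon> * G / 4" by (simp add: mult.commute)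
      have e: "g \<bullet> (q - y) = (1 + l) * (g \<bullet> (z - y))" using qy by simp
      have hx: "\<bar>h x\<bar> \<le> Bd" and hy: "\<bar>h y\<bar> \<le> Bd" and hc: "\<bar>h c1\<bar> \<le> Bd"
        using Bd xC yC c1C by auto
      have f: "\<epsilon> * G \<ge> 4 + 16 * Bd + \<epsilon>"
        using eG0 mult_left_mono[OF GG0, of \<epsilon>] \<epsilon> by simp
      define \<alpha> where "\<alpha> = g \<bullet> (y - z)"
      have i1: "g \<bullet> (z - y) = g \<bullet> (z - x) - g \<bullet> (y - x)" by (simp add: inner_diff_right)
      have i2: "g \<bullet> (y - q) = g \<bullet> (y - x) + g \<bullet> (x - q)" by (simp add: inner_diff_right)
      have i3: "g \<bullet> (y - q) = - (g \<bullet> (q - y))" by (simp add: inner_diff_right)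
      have i4: "\<alpha> = - (g \<bullet> (z - y))" unfolding \<alpha>_def by (simp add: inner_diff_right)
      have alpha_gt: "\<alpha> > \<epsilon> * G / 2 - 1 - 2 * Bd" using a b' hx hy hc i1 i4 by linarith
      have alpha_pos: "\<alpha> \<ge> 0" using alpha_gt f \<epsilon>(1) Bd0 by (simp add: field_simps)
      have "g \<bullet> (y - q) = (1 + l) * \<alpha>" using i3 e i4 by simp
      also have "\<dots> \<ge> \<alpha>" using l alpha_pos by (simp add: distrib_right)
      finally have "g \<bullet> (y - q) \<ge> \<alpha>" .
      moreover have "g \<bullet> (y - q) \<le> 2 * Bd + \<epsilon> * G / 4" using i2 c dd hx hy by linarith
      ultimately show False using alpha_gt f \<epsilon>(1) by linarith
    qed
  qed
  then show ?thesis using \<delta> by (intro exI[of _ "\<delta> / 4"]) auto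
qed

lemma B_cone:
  assumes B: "condB h C" and yC: "y \<in> C"
  shows "\<exists>\<rho>>0. \<forall>z\<in>C. dist z y < \<rho> \<longrightarrow> 2 *\<^sub>R z - y \<in> C"
proof -
  obtain \<rho> where \<rho>: "\<rho> > 0" and R: "\<forall>z\<in>interior C. dist z y < \<rho> \<longrightarrow> 2 *\<^sub>R z - y \<in> C"
    using B_cone_int[OF B yC] by blast
  define S where "S = (\<lambda>z. 2 *\<^sub>R z - y) -` C"
  have cC: "closed C" using cpt compact_imp_closed by blast
  have cS: "closed S" unfolding S_def
    by (rule continuous_closed_vimage[OF cC]) (intro continuous_intros)
  have sub1: "ball y \<rho> \<inter> interior C \<subseteq> S" using R by (auto simp: S_def dist_commute)
  have "\<forall>z\<in>C. dist z y < \<rho> \<longrightarrow> 2 *\<^sub>R z - y \<in> C"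
  proof (intro ballI impI)
    fix z assume zC: "z \<in> C" and zy: "dist z y < \<rho>"
    have "z \<in> closure (interior C)"
      using zC convex_closure_interior[OF cvx int_ne] closure_subset by blast
    then have "z \<in> ball y \<rho> \<inter> closure (interior C)" using zy by (simp add: dist_commute)
    also have "\<dots> \<subseteq> closure (ball y \<rho> \<inter> interior C)" by (rule open_Int_closure_subset) simp
    also have "\<dots> \<subseteq> closure S" by (rule closure_mono[OF sub1])
    also have "\<dots> = S" using cS by simp
    finally show "2 *\<^sub>R z - y \<in> C" by (simp add: S_def)
  qed
  then show ?thesis using \<rho> by blast
qed

lemma polytope_of_B:
  assumes B: "condB h C"
  shows "polytope C"
proof -
  define T where "T = {x. x extreme_point_of C}"
  have TC: "T \<subseteq> C" unfolding T_def extreme_point_of_def by blast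
  have fin: "finite T"
  proof (rule ccontr)
    assume "infinite T"
    then obtain y where yC: "y \<in> C" and yl: "y islimpt T"
      using cpt TC unfolding compact_eq_Bolzano_Weierstrass by blast
    obtain \<rho> where \<rho>: "\<rho> > 0" and R: "\<forall>z\<in>C. dist z y < \<rho> \<longrightarrow> 2 *\<^sub>R z - y \<in> C"
      using B_cone[OF B yC] by blast
    obtain e where eT: "e \<in> T" and ey: "e \<noteq> y" and dey: "dist e y < \<rho>"
      using yl \<rho> unfolding islimpt_approachable by blast
    define p where "p = 2 *\<^sub>R e - y"
    have pC: "p \<in> C" using R eT TC dey unfolding p_def by blast
    have mid: "midpoint y p = e" unfolding midpoint_def p_def
      by (simp add: scaleR_2 algebra_simps) (metis scaleR_add_left field_sum_of_halves scaleR_one)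
    have "y \<noteq> p"
    proof
      assume "y = p"
      then have "2 *\<^sub>R e = 2 *\<^sub>R y" unfolding p_def by (simp add: algebra_simps scaleR_2)
      then show False using ey by simp
    qed
    then have "e \<in> open_segment y p" using mid midpoint_in_open_segment by metis
    then show False using eT yC pC unfolding T_def extreme_point_of_def by blast
  qed
  show ?thesis unfolding polytope_def
    using Krein_Milman_Minkowski[OF cpt cvx] fin T_def by blast
qed

end

theorem theorem1:
  fixes C :: "'a::euclidean_space set" and h :: "'a \<Rightarrow> real"
  assumes "convex C" and "compact C" and "interior C \<noteq> {}"
    and "legendre h C" and "continuous_on C h"
  shows "(condA h C \<longleftrightarrow> strictly_convex_on C h) \<and> (condB h C \<longleftrightarrow> polytope C)"
  using A_of_strict[OF assms] strict_of_A[OF assms] B_of_polytope[OF assms] polytope_of_B[OF assms]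
  by blast

end
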